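(* Let $G_1$ and $G_2$ be connected graphs, each with at least two vertices. Then $$\chi_d^t(G_1\star G_2)\leq \chi_d^t(G_1)+\chi_d^t(G_2).$$
   Context: All graphs are simple and finite. A total dominator coloring (TD-coloring) of a graph $G$ with no isolated vertex is a proper vertex coloring of $G$ in which every vertex of $G$ is adjacent to every vertex of some color class (a color class being the set of all vertices receiving a given color). The total dominator chromatic number (TDC-number) $\chi_d^t(G)$ is the minimum number of colors in a TD-coloring of $G$. The neighbourhood corona $G_1\star G_2$ of graphs $G_1$ and $G_2$ is the graph obtained by taking one copy of $G_1$ and $|V(G_1)|$ copies of $G_2$, and, for each $i$, joining every neighbour (in $G_1$) of the $i$-th vertex of $G_1$ to every vertex of the $i$-th copy of $G_2$. *)

theory Defs
  imports Main
begin

definition simple_graph :: "'a set \<Rightarrow> ('a \<Rightarrow> 'a \<Rightarrow> bool) \<Rightarrow> bool" where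
  "simple_graph V E \<longleftrightarrow> finite V \<and> (\<forall>u v. E u v \<longrightarrow> u \<in> V \<and> v \<in> V)
     \<and> (\<forall>u v. E u v \<longrightarrow> E v u) \<and> (\<forall>v. \<not> E v v)"

definition connected_graph :: "'a set \<Rightarrow> ('a \<Rightarrow> 'a \<Rightarrow> bool) \<Rightarrow> bool" where
  "connected_graph V E \<longleftrightarrow> V \<noteq> {} \<and> (\<forall>u\<in>V. \<forall>v\<in>V. E\<^sup>*\<^sup>* u v)"

definition no_isolated :: "'a set \<Rightarrow> ('a \<Rightarrow> 'a \<Rightarrow> bool) \<Rightarrow> bool" where
  "no_isolated V E \<longleftrightarrow> (\<forall>v\<in>V. \<exists>u. E v u)"

definition proper_coloring :: "'a set \<Rightarrow> ('a \<Rightarrow> 'a \<Rightarrow> bool) \<Rightarrow> ('a \<Rightarrow> nat) \<Rightarrow> bool" where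
  "proper_coloring V E c \<longleftrightarrow> (\<forall>u v. E u v \<longrightarrow> c u \<noteq> c v)"

definition color_class :: "'a set \<Rightarrow> ('a \<Rightarrow> nat) \<Rightarrow> nat \<Rightarrow> 'a set" where
  "color_class V c j = {v\<in>V. c v = j}"

definition td_coloring :: "'a set \<Rightarrow> ('a \<Rightarrow> 'a \<Rightarrow> bool) \<Rightarrow> ('a \<Rightarrow> nat) \<Rightarrow> bool" where
  "td_coloring V E c \<longleftrightarrow> proper_coloring V E c \<and>
     (\<forall>v\<in>V. \<exists>j\<in>c ` V. \<forall>u\<in>color_class V c j. E v u)"

definition td_chromatic :: "'a set \<Rightarrow> ('a \<Rightarrow> 'a \<Rightarrow> bool) \<Rightarrow> nat" where
  "td_chromatic V E = (LEAST k. \<exists>c. td_coloring V E c \<and> card (c ` V) = k)"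

text \<open>Neighbourhood corona: vertices Inl v (copy of G1) and Inr (i, w) (vertex w of the
  i-th copy of G2, one copy for each vertex i of G1).\<close>
definition ncorona_V :: "'a set \<Rightarrow> 'b set \<Rightarrow> ('a + 'a \<times> 'b) set" where
  "ncorona_V V1 V2 = Inl ` V1 \<union> Inr ` (V1 \<times> V2)"

fun ncorona_E :: "('a \<Rightarrow> 'a \<Rightarrow> bool) \<Rightarrow> 'b set \<Rightarrow> ('b \<Rightarrow> 'b \<Rightarrow> bool)
    \<Rightarrow> ('a + 'a \<times> 'b) \<Rightarrow> ('a + 'a \<times> 'b) \<Rightarrow> bool" where
  "ncorona_E E1 V2 E2 (Inl u) (Inl v) = E1 u v"
| "ncorona_E E1 V2 E2 (Inl u) (Inr (i, w)) = (E1 u i \<and> w \<in> V2)"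
| "ncorona_E E1 V2 E2 (Inr (i, w)) (Inl u) = (E1 u i \<and> w \<in> V2)"
| "ncorona_E E1 V2 E2 (Inr (i, w)) (Inr (j, x)) = (i = j \<and> E2 w x)"

end

theory Submission
  imports Defs
begin

lemma exists_td:
  assumes "simple_graph V E" "connected_graph V E" "card V \<ge> 2"
  shows "\<exists>c. td_coloring V E c"
proof -
  have fin: "finite V" using assms(1) by (simp add: simple_graph_def)
  obtain f where f: "bij_betw f V {0..<card V}" using ex_bij_betw_finite_nat[OF fin] by blast
  hence inj: "inj_on f V" by (simp add: bij_betw_def)
  have nb: "\<exists>u. E v u" if "v \<in> V" for v
  proof -
    have "\<not> V \<subseteq> {v}"
    proof
      assume "V \<subseteq> {v}"
      hence "card V \<le> card {v}" by (rule card_mono[rotated]) simp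
      thus False using assms(3) by simp
    qed
    then obtain u where u: "u \<in> V" "u \<noteq> v" by blast
    have "E\<^sup>*\<^sup>* v u" using assms(2) that u unfolding connected_graph_def by blast
    thus ?thesis using u(2) by (cases rule: converse_rtranclpE) auto
  qed
  have "td_coloring V E f"
    unfolding td_coloring_def proper_coloring_def
  proof (intro conjI allI impI ballI)
    fix u v assume "E u v"
    hence "u \<in> V" "v \<in> V" "u \<noteq> v" using assms(1) unfolding simple_graph_def by metis+
    thus "f u \<noteq> f v" using inj by (meson inj_on_eq_iff)
  next
    fix v assume v: "v \<in> V"
    then obtain u where u: "E v u" using nb by blast
    hence uV: "u \<in> V" using assms(1) unfolding simple_graph_def by blast
    have "\<forall>x\<in>color_class V f (f u). E v x"
      using u uV inj unfolding color_class_def by (auto dest: inj_onD)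
    thus "\<exists>j\<in>f ` V. \<forall>x\<in>color_class V f j. E v x" using uV by blast
  qed
  thus ?thesis by blast
qed

lemma td_least:
  assumes "\<exists>c. td_coloring V E c"
  shows "\<exists>c. td_coloring V E c \<and> card (c ` V) = td_chromatic V E"
  unfolding td_chromatic_def
  by (rule LeastI_ex) (use assms in blast)

theorem theorem3:
  fixes V1 :: "'a set" and E1 :: "'a \<Rightarrow> 'a \<Rightarrow> bool"
    and V2 :: "'b set" and E2 :: "'b \<Rightarrow> 'b \<Rightarrow> bool"
  assumes "simple_graph V1 E1" and "connected_graph V1 E1" and "card V1 \<ge> 2"
    and "simple_graph V2 E2" and "connected_graph V2 E2" and "card V2 \<ge> 2"
  shows "td_chromatic (ncorona_V V1 V2) (ncorona_E E1 V2 E2)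
           \<le> td_chromatic V1 E1 + td_chromatic V2 E2"
proof -
  obtain c1 where c1: "td_coloring V1 E1 c1" "card (c1 ` V1) = td_chromatic V1 E1"
    using td_least[OF exists_td[OF assms(1-3)]] by blast
  obtain c2 where c2: "td_coloring V2 E2 c2" "card (c2 ` V2) = td_chromatic V2 E2"
    using td_least[OF exists_td[OF assms(4-6)]] by blast
  have fin1: "finite V1" and fin2: "finite V2"
    using assms(1,4) by (auto simp: simple_graph_def)
  define M where "M = Suc (Max (c1 ` V1))"
  have ltM: "c1 u < M" if "u \<in> V1" for u
    using that fin1 unfolding M_def by (simp add: le_imp_less_Suc)
  define c :: "'a + 'a \<times> 'b \<Rightarrow> nat" where
    "c = case_sum c1 (\<lambda>p. M + c2 (snd p))"
  let ?V = "ncorona_V V1 V2" and ?E = "ncorona_E E1 V2 E2"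
  have E1V: "u \<in> V1" "v \<in> V1" "E1 v u" if "E1 u v" for u v
    using assms(1) that unfolding simple_graph_def by blast+
  have pc1: "\<And>u v. E1 u v \<Longrightarrow> c1 u \<noteq> c1 v" and pc2: "\<And>u v. E2 u v \<Longrightarrow> c2 u \<noteq> c2 v"
    using c1(1) c2(1) unfolding td_coloring_def proper_coloring_def by blast+
  have dom1: "\<exists>j\<in>c1 ` V1. \<forall>u\<in>color_class V1 c1 j. E1 v u" if "v \<in> V1" for v
    using c1(1) that unfolding td_coloring_def by blast
  have proper: "proper_coloring ?V ?E c"
    unfolding proper_coloring_def
  proof (intro allI impI)
    fix x y assume e: "?E x y"
    show "c x \<noteq> c y"
    proof (cases x)
      case (Inl u) note xu = this
      show ?thesis
      proof (cases y)
        case (Inl v) thus ?thesis using e xu pc1 by (simp add: c_def)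
      next
        case (Inr p) then obtain i w where "y = Inr (i, w)" by (cases p) auto
        thus ?thesis using e xu E1V ltM[of u] by (auto simp: c_def)
      qed
    next
      case (Inr p) then obtain i w where xi: "x = Inr (i, w)" by (cases p) auto
      show ?thesis
      proof (cases y)
        case (Inl v) thus ?thesis using e xi E1V ltM[of v] by (auto simp: c_def)
      next
        case (Inr q) then obtain j z where "y = Inr (j, z)" by (cases q) auto
        thus ?thesis using e xi pc2 by (auto simp: c_def)
      qed
    qed
  qed
  have td: "td_coloring ?V ?E c"
    unfolding td_coloring_def
  proof (intro conjI proper ballI)
    fix x assume x: "x \<in> ?V"
    show "\<exists>j\<in>c ` ?V. \<forall>u\<in>color_class ?V c j. ?E x u"
    proof (cases x)
      case (Inl v)
      hence v: "v \<in> V1" using x by (auto simp: ncorona_V_def)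
      obtain j where j: "j \<in> c1 ` V1" "\<forall>u\<in>color_class V1 c1 j. E1 v u" using dom1[OF v] by blast
      have jM: "j < M" using j(1) ltM by auto
      have "j \<in> c ` ?V" using j(1) by (force simp: c_def ncorona_V_def)
      moreover have "\<forall>u\<in>color_class ?V c j. ?E x u"
        using j(2) jM Inl by (auto simp: color_class_def ncorona_V_def c_def)
      ultimately show ?thesis by blast
    next
      case (Inr p)
      then obtain i w where xi: "x = Inr (i, w)" "i \<in> V1" "w \<in> V2"
        using x by (auto simp: ncorona_V_def)
      obtain j where j: "j \<in> c1 ` V1" "\<forall>u\<in>color_class V1 c1 j. E1 i u" using dom1[OF xi(2)] by blast
      have jM: "j < M" using j(1) ltM by auto
      have "j \<in> c ` ?V" using j(1) by (force simp: c_def ncorona_V_def)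
      moreover have "\<forall>u\<in>color_class ?V c j. ?E x u"
        using j(2) jM xi E1V by (auto simp: color_class_def ncorona_V_def c_def)
      ultimately show ?thesis by blast
    qed
  qed
  have img: "c ` ?V \<subseteq> c1 ` V1 \<union> (\<lambda>k. M + k) ` (c2 ` V2)"
    by (auto simp: ncorona_V_def c_def)
  have "card (c ` ?V) \<le> card (c1 ` V1 \<union> (\<lambda>k. M + k) ` (c2 ` V2))"
    by (rule card_mono[OF _ img]) (use fin1 fin2 in auto)
  also have "\<dots> \<le> card (c1 ` V1) + card ((\<lambda>k. M + k) ` (c2 ` V2))" by (rule card_Un_le)
  also have "\<dots> \<le> card (c1 ` V1) + card (c2 ` V2)" using card_image_le fin2 by auto
  finally have le: "card (c ` ?V) \<le> td_chromatic V1 E1 + td_chromatic V2 E2" using c1 c2 by simp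
  have "td_chromatic ?V ?E \<le> card (c ` ?V)"
    unfolding td_chromatic_def by (rule Least_le) (use td in blast)
  thus ?thesis using le by linarith
qed

end
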